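(* Let $A\in\{\mathbb Z,\mathbb R\}$ and let $K,X\subset\mathbb R^d$ be $d$-dimensional convex bodies with $\mathrm{width}(K)=\mathrm{Flt}_d^A(X)$. Then $K$ contains an $A$-unimodular copy of $X$.
   Context: A convex body is a nonempty compact convex subset of $\mathbb R^d$. An $A$-unimodular transformation is a map $T(x)=Mx+b$ with $M\in \mathrm{GL}_d(\mathbb Z)$ and $b\in A^d$; an $A$-unimodular copy of $X$ is $T(X)$ for such a $T$. For $u\in(\mathbb Z^d)^*$, $\mathrm{width}_u(K)=\sup_{x,y\in K}|u(x)-u(y)|$ and $\mathrm{width}(K)=\inf_{u\in(\mathbb Z^d)^*\setminus\{0\}}\mathrm{width}_u(K)$. $\mathrm{Flt}_d^A(X)=\sup\{\mathrm{width}(K'): K'\subset\mathbb R^d \text{ a convex body containing no } A\text{-unimodular copy of } X\}$. *)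

theory Defs
  imports "HOL-Analysis.Analysis"
begin

definition convex_body :: "(real^'n) set \<Rightarrow> bool" where
  "convex_body K \<longleftrightarrow> K \<noteq> {} \<and> compact K \<and> convex K"

definition int_vec :: "real^'n \<Rightarrow> bool" where
  "int_vec u \<longleftrightarrow> (\<forall>i. u $ i \<in> \<int>)"

definition int_mat :: "real^'n^'n \<Rightarrow> bool" where
  "int_mat M \<longleftrightarrow> (\<forall>i j. M $ i $ j \<in> \<int>)"

definition GL_Z :: "(real^'n^'n) set" where
  "GL_Z = {M. int_mat M \<and> invertible M \<and> int_mat (matrix_inv M)}"

definition contains_copy :: "real set \<Rightarrow> (real^'n) set \<Rightarrow> (real^'n) set \<Rightarrow> bool" where
  "contains_copy A K X \<longleftrightarrow>
     (\<exists>M b. M \<in> GL_Z \<and> (\<forall>i. b $ i \<in> A) \<and> (\<lambda>x. M *v x + b) ` X \<subseteq> K)"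

text \<open>Functionals in (Z^d)^* are represented as x \<mapsto> u \<bullet> x with u integer.\<close>
definition width_dir :: "real^'n \<Rightarrow> (real^'n) set \<Rightarrow> real" where
  "width_dir u K = Sup {\<bar>u \<bullet> x - u \<bullet> y\<bar> | x y. x \<in> K \<and> y \<in> K}"

definition lattice_width :: "(real^'n) set \<Rightarrow> real" where
  "lattice_width K = Inf {width_dir u K | u. int_vec u \<and> u \<noteq> 0}"

definition Flt :: "real set \<Rightarrow> (real^'n) set \<Rightarrow> ereal" where
  "Flt A X = Sup {ereal (lattice_width K') | K'. convex_body K' \<and> \<not> contains_copy A K' X}"

end

theory Submission
  imports Defs
begin

definition enl :: "real \<Rightarrow> (real^'n) set \<Rightarrow> (real^'n) set" where
  "enl r K = {x + y | x y. x \<in> K \<and> y \<in> cball 0 r}"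

lemma enl_body: assumes "convex_body K" "r \<ge> 0" shows "convex_body (enl r K)"
proof -
  have cv: "convex K" and cp: "compact K" and ne: "K \<noteq> {}" using assms(1) unfolding convex_body_def by simp_all
  have eq: "enl r K = (\<Union>x\<in>K. \<Union>y\<in>cball 0 r. {x + y})"
  proof (rule set_eqI)
    fix p
    show "p \<in> enl r K \<longleftrightarrow> p \<in> (\<Union>x\<in>K. \<Union>y\<in>cball 0 r. {x + y})"
      unfolding enl_def mem_Collect_eq UN_iff singleton_iff by metis
  qed
  have "convex (enl r K)" unfolding eq by (rule convex_sums[OF cv convex_cball])
  moreover have "compact (enl r K)" unfolding enl_def by (rule compact_sums[OF cp compact_cball])
  moreover have "enl r K \<noteq> {}"
  proof -
    obtain x where x: "x \<in> K" using ne by blast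
    have "x + 0 \<in> enl r K" unfolding enl_def mem_Collect_eq
      by (intro exI[of _ x] exI[of _ "0::real^'a"] conjI refl x) (simp add: assms(2))
    then show ?thesis by blast
  qed
  ultimately show ?thesis unfolding convex_body_def by simp
qed

lemma bdd_wd: assumes "compact K"
  shows "bdd_above {\<bar>u \<bullet> x - u \<bullet> y\<bar> | x y. x\<in>K \<and> y\<in>K}"
proof -
  obtain B where B: "\<forall>x\<in>K. norm x \<le> B" using compact_imp_bounded[OF assms] bounded_iff by blast
  show ?thesis unfolding bdd_above_def
  proof (intro exI[of _ "norm u * (B + B)"] ballI)
    fix z assume "z \<in> {\<bar>u \<bullet> x - u \<bullet> y\<bar> | x y. x\<in>K \<and> y\<in>K}"
    then obtain x y where xy: "x \<in> K" "y \<in> K" "z = \<bar>u \<bullet> x - u \<bullet> y\<bar>" by auto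
    have "z = \<bar>u \<bullet> (x - y)\<bar>" using xy by (simp add: inner_diff_right)
    also have "\<dots> \<le> norm u * norm (x - y)" by (rule Cauchy_Schwarz_ineq2)
    also have "\<dots> \<le> norm u * (B + B)"
      using B[rule_format, OF xy(1)] B[rule_format, OF xy(2)] norm_triangle_ineq4[of x y]
      by (intro mult_left_mono) auto
    finally show "z \<le> norm u * (B + B)" .
  qed
qed

lemma wd_ge0: assumes "K \<noteq> {}" "compact K" shows "0 \<le> width_dir u K"
proof -
  obtain x where "x \<in> K" using assms by auto
  then have "\<bar>u \<bullet> x - u \<bullet> x\<bar> \<le> width_dir u K" unfolding width_dir_def
    using bdd_wd[OF assms(2)] by (intro cSup_upper) auto
  then show ?thesis by simp
qed

lemma lw_le: assumes "K \<noteq> {}" "compact K" "int_vec u" "u \<noteq> 0"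
  shows "lattice_width K \<le> width_dir u K"
  unfolding lattice_width_def using assms wd_ge0[OF assms(1,2)]
  by (intro cInf_lower) (auto simp: bdd_below_def)

lemma int_vec_norm: assumes "int_vec u" "u \<noteq> 0" shows "1 \<le> norm u"
proof -
  obtain i where i: "u $ i \<noteq> 0" using assms(2) by (metis vec_eq_iff zero_index)
  have "u $ i \<in> \<int>" using assms(1) unfolding int_vec_def by auto
  then have "1 \<le> \<bar>u $ i\<bar>" using i by (metis Ints_nonzero_abs_ge1)
  then show ?thesis using component_le_norm_cart[of u i] by linarith
qed

lemma wd_grow: assumes "K \<noteq> {}" "compact K" "r > 0" "1 \<le> norm u"
  shows "width_dir u K + 2 * r \<le> width_dir u (enl r K)"
proof -
  have cK': "compact (enl r K)" unfolding enl_def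
    by (rule compact_sums[OF assms(2) compact_cball])
  let ?W = "width_dir u (enl r K)"
  define v where "v = (r / norm u) *\<^sub>R u"
  have nu: "norm u > 0" using assms by auto
  have uv: "u \<bullet> v = r * norm u" unfolding v_def using nu
    by (simp add: power2_norm_eq_inner[symmetric] power2_eq_square)
  have vin: "v \<in> cball 0 r" "- v \<in> cball 0 r" unfolding v_def using nu assms(3) by auto
  have key: "\<bar>u \<bullet> x - u \<bullet> y\<bar> + 2 * r \<le> ?W" if "x \<in> K" "y \<in> K" "u \<bullet> y \<le> u \<bullet> x" for x y
  proof -
    have xv: "x + v \<in> enl r K" unfolding enl_def mem_Collect_eq
      by (intro exI[of _ x] exI[of _ v] conjI refl that(1) vin(1))
    have yv: "y + - v \<in> enl r K" unfolding enl_def mem_Collect_eq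
      by (intro exI[of _ y] exI[of _ "- v"] conjI refl that(2) vin(2))
    have mem: "\<bar>u \<bullet> (x + v) - u \<bullet> (y + - v)\<bar> \<in> {\<bar>u \<bullet> a - u \<bullet> b\<bar> |a b. a \<in> enl r K \<and> b \<in> enl r K}"
      unfolding mem_Collect_eq by (intro exI[of _ "x + v"] exI[of _ "y + - v"] conjI refl xv yv)
    have le: "\<bar>u \<bullet> (x + v) - u \<bullet> (y + - v)\<bar> \<le> ?W" unfolding width_dir_def
      by (rule cSup_upper[OF mem bdd_wd[OF cK']])
    have eqd: "u \<bullet> (x + v) - u \<bullet> (y + - v) = u \<bullet> x - u \<bullet> y + 2 * (r * norm u)"
      using uv by (simp add: inner_add_right inner_minus_right inner_diff_right)
    have nn: "0 \<le> u \<bullet> x - u \<bullet> y + 2 * (r * norm u)"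
      using that(3) nu assms(3) by (simp add: add_nonneg_nonneg)
    have "\<bar>u \<bullet> (x + v) - u \<bullet> (y + - v)\<bar> = u \<bullet> x - u \<bullet> y + 2 * (r * norm u)"
      unfolding eqd using nn by (rule abs_of_nonneg)
    moreover have "\<bar>u \<bullet> x - u \<bullet> y\<bar> = u \<bullet> x - u \<bullet> y" using that(3) by simp
    moreover have "r \<le> r * norm u" using assms by simp
    ultimately show ?thesis using le by linarith
  qed
  have "width_dir u K \<le> ?W - 2 * r" unfolding width_dir_def[of u K]
  proof (rule cSup_least)
    obtain x0 where x0: "x0 \<in> K" using assms(1) by blast
    have "\<bar>u \<bullet> x0 - u \<bullet> x0\<bar> \<in> {\<bar>u \<bullet> x - u \<bullet> y\<bar> |x y. x \<in> K \<and> y \<in> K}"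
      unfolding mem_Collect_eq by (intro exI[of _ x0] conjI refl x0)
    then show "{\<bar>u \<bullet> x - u \<bullet> y\<bar> |x y. x \<in> K \<and> y \<in> K} \<noteq> {}" by (metis empty_iff)
    fix z assume "z \<in> {\<bar>u \<bullet> x - u \<bullet> y\<bar> |x y. x \<in> K \<and> y \<in> K}"
    then obtain x y where xy: "x \<in> K" "y \<in> K" "z = \<bar>u \<bullet> x - u \<bullet> y\<bar>" by auto
    show "z \<le> ?W - 2 * r"
    proof (cases "u \<bullet> y \<le> u \<bullet> x")
      case True then show ?thesis using key[OF xy(1,2)] xy by linarith
    next
      case False then show ?thesis using key[OF xy(2,1)] xy by linarith
    qed
  qed
  then show ?thesis by linarith
qed

lemma lw_grow: assumes "K \<noteq> {}" "compact K" "r > 0"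
  shows "lattice_width K + 2 * r \<le> lattice_width (enl r K)"
proof -
  show ?thesis
    unfolding lattice_width_def[of "enl r K"]
  proof (rule cInf_greatest)
    have "int_vec (axis undefined 1 :: real^'a)" unfolding int_vec_def axis_def by auto
    moreover have "(axis undefined 1 :: real^'a) \<noteq> 0" by simp
    ultimately show "{width_dir u (enl r K) |u. int_vec u \<and> u \<noteq> (0::real^'a)} \<noteq> {}" by blast
    fix z assume "z \<in> {width_dir u (enl r K) |u. int_vec u \<and> u \<noteq> (0::real^'a)}"
    then obtain u where u: "int_vec u" "u \<noteq> 0" "z = width_dir u (enl r K)" by auto
    show "lattice_width K + 2 * r \<le> z"
      using lw_le[OF assms(1,2) u(1,2)] wd_grow[OF assms int_vec_norm[OF u(1,2)]] u(3) by linarith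
  qed
qed

lemma enl_mono: "r \<le> s \<Longrightarrow> enl r K \<subseteq> enl s K"
  unfolding enl_def by fastforce

lemma enl_dest: assumes "p \<in> enl r K" shows "\<exists>y\<in>K. norm (p - y) \<le> r"
proof -
  from assms have "\<exists>y z. p = y + z \<and> y \<in> K \<and> z \<in> cball 0 r" unfolding enl_def mem_Collect_eq .
  then obtain y z where h: "p = y + z" "y \<in> K" "z \<in> cball 0 r" by blast
  have "norm (p - y) = norm z" using h(1) by simp
  also have "\<dots> \<le> r" using h(3) by (simp add: mem_cball_0)
  finally show ?thesis using h(2) by blast
qed

lemma limit_copy:
  fixes K X :: "(real^'n) set"
  assumes cA: "closed A" and cK: "compact K" and e: "e > 0" and cX: "cball c e \<subseteq> X"
    and H: "\<forall>n. contains_copy A (enl (1 / real (Suc n)) K) X"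
  shows "contains_copy A K X"
proof -
  have "\<forall>n. \<exists>p. fst p \<in> GL_Z \<and> (\<forall>i. snd p $ i \<in> A) \<and>
      (\<lambda>x. fst p *v x + snd p) ` X \<subseteq> enl (1 / real (Suc n)) K"
    using H unfolding contains_copy_def by fastforce
  from choice[OF this] obtain f where f: "\<forall>n. fst (f n) \<in> GL_Z \<and> (\<forall>i. snd (f n) $ i \<in> A) \<and>
      (\<lambda>x. fst (f n) *v x + snd (f n)) ` X \<subseteq> enl (1 / real (Suc n)) K" by blast
  define M where "M n = fst (f n)" for n
  define b where "b n = snd (f n)" for n
  have Mb: "\<And>n. M n \<in> GL_Z" "\<And>n i. b n $ i \<in> A"
    "\<And>n. (\<lambda>x. M n *v x + b n) ` X \<subseteq> enl (1 / real (Suc n)) K"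
    using f unfolding M_def b_def by auto
  have "compact (enl 1 K)" unfolding enl_def using compact_sums[OF cK compact_cball[of 0 1]] by simp
  then obtain R where R: "\<forall>y\<in>enl 1 K. norm y \<le> R" using compact_imp_bounded bounded_iff by blast
  have inK1: "M n *v x + b n \<in> enl 1 K" if "x \<in> X" for n x
  proof -
    have "1 / real (Suc n) \<le> 1" by simp
    then show ?thesis using Mb(3)[of n] that enl_mono[of "1 / real (Suc n)" 1 K] by blast
  qed
  have Mv: "norm (M n *v v) \<le> 2 * R" if "norm v \<le> e" for n v
  proof -
    have "c + v \<in> X" "c \<in> X" using cX that e by (auto simp: dist_norm)
    then have a: "norm (M n *v (c + v) + b n) \<le> R" "norm (M n *v c + b n) \<le> R"
      using R inK1 by blast+
    have "M n *v v = (M n *v (c + v) + b n) - (M n *v c + b n)"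
      by (simp add: matrix_vector_right_distrib)
    then have "norm (M n *v v) \<le> norm (M n *v (c + v) + b n) + norm (M n *v c + b n)"
      by (metis norm_triangle_ineq4)
    then show ?thesis using a by linarith
  qed
  define C where "C = 2 * R / e"
  have Mij: "\<bar>M n $ i $ j\<bar> \<le> C" for n i j
  proof -
    have "norm (M n *v (e *\<^sub>R axis j 1)) \<le> 2 * R" using e by (intro Mv) simp
    moreover have "M n *v (e *\<^sub>R axis j 1) = e *\<^sub>R column j (M n)"
      by (simp add: matrix_vector_mult_scaleR matrix_vector_mult_basis)
    moreover have "\<bar>M n $ i $ j\<bar> \<le> norm (column j (M n))"
      using component_le_norm_cart[of "column j (M n)" i] by (simp add: column_def)
    ultimately have "e * \<bar>M n $ i $ j\<bar> \<le> 2 * R" using e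
      by (smt (verit) mult_left_mono norm_scaleR)
    then show ?thesis unfolding C_def using e by (simp add: field_simps)
  qed
  define D where "D = real CARD('n) * real CARD('n) * C"
  have normM: "norm (M n) \<le> D" for n
  proof -
    have "norm (M n) \<le> (\<Sum>i\<in>UNIV. norm (M n $ i))" by (simp add: norm_vec_def L2_set_le_sum)
    also have "\<dots> \<le> (\<Sum>i\<in>UNIV. \<Sum>j\<in>UNIV. \<bar>M n $ i $ j\<bar>)"
      by (intro sum_mono norm_le_l1_cart)
    also have "\<dots> \<le> (\<Sum>i\<in>(UNIV::'n set). \<Sum>j\<in>(UNIV::'n set). C)"
      by (intro sum_mono Mij)
    finally show ?thesis unfolding D_def by simp
  qed
  have normMc: "norm (M n *v c) \<le> D * norm c" for n
  proof -
    have "norm (M n *v c) \<le> onorm ((*v) (M n)) * norm c"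
      by (rule onorm[OF matrix_vector_mul_bounded_linear])
    also have "\<dots> \<le> D * norm c" unfolding D_def
      by (intro mult_right_mono onorm_le_matrix_component Mij) simp
    finally show ?thesis .
  qed
  have normb: "norm (b n) \<le> R + D * norm c" for n
  proof -
    have "c \<in> X" using cX e by auto
    then have "norm (M n *v c + b n) \<le> R" using R inK1 by blast
    moreover have "norm (b n) \<le> norm (M n *v c + b n) + norm (M n *v c)"
      using norm_triangle_ineq4[of "M n *v c + b n" "M n *v c"] by simp
    ultimately show ?thesis using normMc[of n] by linarith
  qed
  have "bounded (range (\<lambda>n. (M n, b n)))" unfolding bounded_iff
  proof (intro exI ballI)
    fix z assume "z \<in> range (\<lambda>n. (M n, b n))"
    then obtain n where "z = (M n, b n)" by auto
    then show "norm z \<le> D + (R + D * norm c)"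
      using norm_Pair_le[of "M n" "b n"] normM[of n] normb[of n] by simp
  qed
  then obtain l and r :: "nat \<Rightarrow> nat" where r: "strict_mono r"
    and lim: "((\<lambda>n. (M n, b n)) \<circ> r) \<longlonglongrightarrow> l"
    using bounded_imp_convergent_subsequence by blast
  define Ml where "Ml = fst l"
  define bl where "bl = snd l"
  have limM: "(\<lambda>k. M (r k)) \<longlonglongrightarrow> Ml"
    using tendsto_fst[OF lim] unfolding Ml_def o_def by simp
  have limb: "(\<lambda>k. b (r k)) \<longlonglongrightarrow> bl"
    using tendsto_snd[OF lim] unfolding bl_def o_def by simp
  have "\<forall>\<^sub>F k in sequentially. \<forall>i. \<forall>j. dist (M (r k) $ i $ j) (Ml $ i $ j) < 1/2"
  proof (intro eventually_all_finite)
    fix i j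
    have "((\<lambda>k. M (r k) $ i $ j) \<longlongrightarrow> Ml $ i $ j) sequentially"
      by (intro tendsto_vec_nth limM)
    then show "\<forall>\<^sub>F k in sequentially. dist (M (r k) $ i $ j) (Ml $ i $ j) < 1/2"
      unfolding tendsto_iff by (meson half_gt_zero zero_less_one)
  qed
  then obtain N where N: "\<And>k i j. k \<ge> N \<Longrightarrow> dist (M (r k) $ i $ j) (Ml $ i $ j) < 1/2"
    unfolding eventually_sequentially by blast
  have intM: "M n $ i $ j \<in> \<int>" for n i j using Mb(1)[of n] unfolding GL_Z_def int_mat_def by auto
  have eqN: "M (r k) = M (r N)" if "k \<ge> N" for k
  proof -
    have "M (r k) $ i $ j = M (r N) $ i $ j" for i j
    proof -
      have "dist (M (r k) $ i $ j) (Ml $ i $ j) < 1/2" "dist (M (r N) $ i $ j) (Ml $ i $ j) < 1/2"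
        using N that by auto
      then have "\<bar>M (r k) $ i $ j - M (r N) $ i $ j\<bar> < 1" unfolding dist_real_def by linarith
      then show ?thesis using Ints_eq_abs_less1[OF intM intM] by blast
    qed
    then show ?thesis by (simp add: vec_eq_iff)
  qed
  have ev: "\<forall>\<^sub>F k in sequentially. M (r k) = M (r N)"
    unfolding eventually_sequentially using eqN by blast
  have "(\<lambda>k. M (r k)) \<longlonglongrightarrow> M (r N)" using tendsto_eventually[OF ev] .
  then have "Ml = M (r N)" using LIMSEQ_unique[OF limM] by blast
  then have MlG: "Ml \<in> GL_Z" using Mb(1) by simp
  have blA: "bl $ i \<in> A" for i
    by (rule closed_sequentially[OF cA, of "\<lambda>k. b (r k) $ i"]) (rule Mb(2), rule tendsto_vec_nth[OF limb])
  have img: "Ml *v x + bl \<in> K" if x: "x \<in> X" for x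
  proof -
    define p where "p k = M (r k) *v x + b (r k)" for k
    have pin: "p k \<in> enl (1 / real (Suc (r k))) K" for k
    proof -
      have "p k \<in> (\<lambda>x. M (r k) *v x + b (r k)) ` X" unfolding p_def using x by (rule imageI)
      then show ?thesis using Mb(3)[of "r k"] by (rule rev_subsetD)
    qed
    define y where "y k = (SOME y. y \<in> K \<and> norm (p k - y) \<le> 1 / real (Suc (r k)))" for k
    have yk: "y k \<in> K \<and> norm (p k - y k) \<le> 1 / real (Suc (r k))" for k
    proof -
      have ex: "\<exists>y. y \<in> K \<and> norm (p k - y) \<le> 1 / real (Suc (r k))"
        using enl_dest[OF pin[of k]] by blast
      show ?thesis unfolding y_def by (rule someI_ex[OF ex])
    qed
    define z where "z k = p k - y k" for k
    have yz1: "M (r k) *v x + b (r k) = y k + z k" for k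
      unfolding z_def p_def[symmetric] by (metis add.commute diff_add_cancel)
    have yz2: "y k \<in> K" for k using yk[of k] by (rule conjunct1)
    have yz3: "norm (z k) \<le> 1 / real (Suc (r k))" for k using yk[of k] unfolding z_def by (rule conjunct2)
    note yz = yz1 yz2 yz3
    have "norm (z k) \<le> inverse (real (Suc k))" for k
    proof -
      have "k \<le> r k" by (rule seq_suble[OF r])
      then have "real (Suc k) \<le> real (Suc (r k))" by simp
      then have "1 / real (Suc (r k)) \<le> 1 / real (Suc k)" by (intro divide_left_mono) auto
      then show ?thesis using yz(3)[of k] unfolding inverse_eq_divide by linarith
    qed
    then have zb: "\<forall>k. norm (z k) \<le> inverse (real (Suc k))" by (rule allI)
    have z0: "z \<longlonglongrightarrow> 0"
      using Lim_null_comparison[OF always_eventually[OF zb] LIMSEQ_inverse_real_of_nat] .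
    have Mx: "(\<lambda>k. M (r k) *v x) \<longlonglongrightarrow> Ml *v x"
      unfolding matrix_vector_mult_def
      by (rule tendsto_vec_lambda, rule tendsto_sum, rule tendsto_mult, rule tendsto_vec_nth,
          rule tendsto_vec_nth, rule limM, rule tendsto_const)
    have "(\<lambda>k. M (r k) *v x + b (r k) - z k) \<longlonglongrightarrow> Ml *v x + bl - 0"
      using tendsto_diff[OF tendsto_add[OF Mx limb] z0] .
    moreover have "y = (\<lambda>k. M (r k) *v x + b (r k) - z k)"
    proof
      fix k show "y k = M (r k) *v x + b (r k) - z k" using yz(1)[of k] by (metis add_diff_cancel)
    qed
    ultimately have "y \<longlonglongrightarrow> Ml *v x + bl" by simp
    then show ?thesis
      by (rule closed_sequentially[OF compact_imp_closed[OF cK] yz(2)])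
  qed
  have "(\<lambda>x. Ml *v x + bl) ` X \<subseteq> K" using img by blast
  then show ?thesis unfolding contains_copy_def
    by (intro exI[of _ Ml] exI[of _ bl] conjI allI MlG blA)
qed

theorem proposition2p9:
  fixes A :: "real set" and K X :: "(real^'n) set"
  assumes "A = \<int> \<or> A = UNIV"
    and "convex_body K" and "interior K \<noteq> {}"
    and "convex_body X" and "interior X \<noteq> {}"
    and "ereal (lattice_width K) = Flt A X"
  shows "contains_copy A K X"
proof -
  have cK: "compact K" "K \<noteq> {}" using assms(2) unfolding convex_body_def by simp_all
  obtain x0 where x0: "x0 \<in> interior X" using assms(5) by (meson ex_in_conv)
  then obtain e where e: "e > 0" "ball x0 e \<subseteq> interior X"
    using open_interior[of X] x0 unfolding open_contains_ball by blast
  have "cball x0 (e/2) \<subseteq> ball x0 e" using e(1) by (simp add: cball_subset_ball_iff)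
  then have cX: "cball x0 (e/2) \<subseteq> X" using e(2) interior_subset[of X] by (rule order.trans[OF order.trans])
  have cA: "closed A"
  proof (cases "A = \<int>")
    case True then show ?thesis by simp
  next
    case False then have "A = UNIV" using assms(1) by blast
    then show ?thesis by simp
  qed
  have ep: "e / 2 > 0" using e by simp
  have "\<forall>n. contains_copy A (enl (1 / real (Suc n)) K) X"
  proof
    fix n
    show "contains_copy A (enl (1 / real (Suc n)) K) X"
    proof (rule ccontr)
      assume nc: "\<not> contains_copy A (enl (1 / real (Suc n)) K) X"
      have rpos: "1 / real (Suc n) > 0" by simp
      have body: "convex_body (enl (1 / real (Suc n)) K)" by (rule enl_body[OF assms(2) less_imp_le[OF rpos]])
      have mem: "ereal (lattice_width (enl (1 / real (Suc n)) K))
          \<in> {ereal (lattice_width K') | K'. convex_body K' \<and> \<not> contains_copy A K' X}"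
        unfolding mem_Collect_eq by (intro exI[of _ "enl (1 / real (Suc n)) K"] conjI refl body nc)
      have "ereal (lattice_width (enl (1 / real (Suc n)) K)) \<le> Flt A X" unfolding Flt_def
        by (rule Sup_upper[OF mem])
      then have "lattice_width (enl (1 / real (Suc n)) K) \<le> lattice_width K"
        unfolding assms(6)[symmetric] ereal_less_eq(3) .
      moreover have "lattice_width K + 2 * (1 / real (Suc n)) \<le> lattice_width (enl (1 / real (Suc n)) K)"
        by (rule lw_grow[OF cK(2,1) rpos])
      ultimately show False using rpos by linarith
    qed
  qed
  then show ?thesis by (rule limit_copy[OF cA cK(1) ep cX])
qed

end
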